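(* Let $\mathcal{C}$ be a periodic cylinder of $\Phi$ and $\mathcal{C}^{-1}$ its reversed cylinder. Then $\mathcal{C}$ is $\lambda^-$-stable if and only if $\mathcal{C}^{-1}$ is $\lambda^+$-stable.
   Context: Let $P$ be a simply connected polygon in $\mathbb{R}^2$ with $d$ sides, labeled $1,\dots,d$, with $\partial P$ oriented anticlockwise. The billiard map $\Phi$ acts on unit vectors $(x,v)$ with $x\in\partial P$ and $v$ pointing into $P$: $\Phi(x,v)=(\bar x,\bar v)$, where $\bar x$ is the first point at which the ray from $x$ in direction $v$ meets $\partial P$ and $\bar v$ is the inward vector obtained by reflecting $v$ in the side containing $\bar x$. Vectors based at vertices, and vectors whose image would be based at a vertex, are excluded; the remaining domain is $M'$. Points of $M'$ have coordinates $(s,\theta)$, $s$ the arc-length parameter of $x$ on $\partial P$, $\theta\in(-\pi/2,\pi/2)$ the oriented angle between $v$ and the inward normal at $x$. $\Sigma_{i,j}$ is the set of $(s,\theta)\in M'$ with $x$ on side $i$ and $\bar x$ on side $j$. For $\lambda>0$ let $R_\lambda(s,\theta)=(s,\lambda\theta)$ and $\Phi_\lambda:=R_\lambda\circ\Phi$ (pinball billiard map for $\lambda\neq1$). The itinerary of an orbit $(s_k,\theta_k)$ is the sequence $(i_k)$ with $(s_k,\theta_k)\in\Sigma_{i_k,i_{k+1}}$. Every periodic orbit of $\Phi$ lies in a periodic cylinder: a maximal one-parameter family of parallel periodic orbits of $\Phi$ with the same itinerary. Let $S(s,\theta)=(s,-\theta)$; the reversed cylinder $\mathcal{C}^{-1}$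 of $\mathcal{C}$ is the periodic cylinder obtained by applying $S$ to $\mathcal{C}$ (time reversal). A periodic orbit $q$ of $\Phi$ is $\lambda^{+}$-stable (resp. $\lambda^-$-stable) if there exist a strictly decreasing (resp. strictly increasing) sequence $\lambda_n\to1$ and, for each $n$, a periodic orbit $q_n$ of $\Phi_{\lambda_n}$ with the same itinerary as $q$ such that $q_n\to q$. A periodic cylinder is $\lambda^\pm$-stable if it contains a $\lambda^\pm$-stable periodic orbit. *)

theory Defs
  imports "HOL-Analysis.Analysis"
begin

text \<open>Polygon with vertices p 0, ..., p (d-1) in the plane (modelled as complex),
  side i is the segment from p i to p (i+1 mod d).\<close>

definition nxt :: "nat \<Rightarrow> nat \<Rightarrow> nat" where
  "nxt d i = Suc i mod d"

definition svec :: "(nat \<Rightarrow> complex) \<Rightarrow> nat \<Rightarrow> nat \<Rightarrow> complex" where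
  "svec p d i = p (nxt d i) - p i"

definition sseg :: "(nat \<Rightarrow> complex) \<Rightarrow> nat \<Rightarrow> nat \<Rightarrow> complex set" where
  "sseg p d i = closed_segment (p i) (p (nxt d i))"

definition bdry :: "(nat \<Rightarrow> complex) \<Rightarrow> nat \<Rightarrow> complex set" where
  "bdry p d = (\<Union>i<d. sseg p d i)"

text \<open>Simple closed polygonal boundary with d genuine sides (adjacent sides not collinear,
  sides meet only at shared endpoints of consecutive sides).\<close>
definition simple_polygon :: "(nat \<Rightarrow> complex) \<Rightarrow> nat \<Rightarrow> bool" where
  "simple_polygon p d \<longleftrightarrow> 3 \<le> d \<and>
     (\<forall>i<d. Im (cnj (svec p d i) * svec p d (nxt d i)) \<noteq> 0) \<and>
     (\<forall>i<d. \<forall>j<d. i \<noteq> j \<longrightarrow>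
        sseg p d i \<inter> sseg p d j \<subseteq>
          (if j = nxt d i then {p j} else {}) \<union> (if i = nxt d j then {p i} else {}))"

text \<open>Anticlockwise orientation: positive signed (shoelace) area.\<close>
definition anticlockwise :: "(nat \<Rightarrow> complex) \<Rightarrow> nat \<Rightarrow> bool" where
  "anticlockwise p d \<longleftrightarrow> (\<Sum>i<d. Im (cnj (p i) * p (nxt d i))) > 0"

definition slen :: "(nat \<Rightarrow> complex) \<Rightarrow> nat \<Rightarrow> nat \<Rightarrow> real" where
  "slen p d i = cmod (svec p d i)"

definition cum :: "(nat \<Rightarrow> complex) \<Rightarrow> nat \<Rightarrow> nat \<Rightarrow> real" where
  "cum p d k = (\<Sum>j<k. slen p d j)"

definition on_side :: "(nat \<Rightarrow> complex) \<Rightarrow> nat \<Rightarrow> nat \<Rightarrow> real \<Rightarrow> bool" where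
  "on_side p d i s \<longleftrightarrow> i < d \<and> cum p d i < s \<and> s < cum p d (Suc i)"

definition regular_s :: "(nat \<Rightarrow> complex) \<Rightarrow> nat \<Rightarrow> real \<Rightarrow> bool" where
  "regular_s p d s \<longleftrightarrow> (\<exists>i. on_side p d i s)"

definition side_of :: "(nat \<Rightarrow> complex) \<Rightarrow> nat \<Rightarrow> real \<Rightarrow> nat" where
  "side_of p d s = (THE i. on_side p d i s)"

definition tang :: "(nat \<Rightarrow> complex) \<Rightarrow> nat \<Rightarrow> nat \<Rightarrow> complex" where
  "tang p d i = svec p d i / of_real (slen p d i)"

text \<open>Inward unit normal (interior lies to the left of anticlockwise sides).\<close>
definition inormal :: "(nat \<Rightarrow> complex) \<Rightarrow> nat \<Rightarrow> nat \<Rightarrow> complex" where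
  "inormal p d i = \<i> * tang p d i"

definition pos :: "(nat \<Rightarrow> complex) \<Rightarrow> nat \<Rightarrow> real \<Rightarrow> complex" where
  "pos p d s = p (side_of p d s) + of_real (s - cum p d (side_of p d s)) * tang p d (side_of p d s)"

definition vel :: "(nat \<Rightarrow> complex) \<Rightarrow> nat \<Rightarrow> real \<Rightarrow> real \<Rightarrow> complex" where
  "vel p d s \<theta> = inormal p d (side_of p d s) * cis \<theta>"

definition first_hit :: "(nat \<Rightarrow> complex) \<Rightarrow> nat \<Rightarrow> real \<Rightarrow> real \<Rightarrow> real \<Rightarrow> bool" where
  "first_hit p d s \<theta> t \<longleftrightarrow> 0 < t \<and> pos p d s + of_real t * vel p d s \<theta> \<in> bdry p d \<and>
     (\<forall>t'. 0 < t' \<and> t' < t \<longrightarrow> pos p d s + of_real t' * vel p d s \<theta> \<notin> bdry p d)"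

definition hit_pt :: "(nat \<Rightarrow> complex) \<Rightarrow> nat \<Rightarrow> real \<Rightarrow> real \<Rightarrow> complex" where
  "hit_pt p d s \<theta> = pos p d s + of_real (THE t. first_hit p d s \<theta> t) * vel p d s \<theta>"

definition arc_of :: "(nat \<Rightarrow> complex) \<Rightarrow> nat \<Rightarrow> complex \<Rightarrow> real" where
  "arc_of p d x = (THE s. regular_s p d s \<and> pos p d s = x)"

text \<open>The domain M': base point not a vertex, inward direction, image not at a vertex.\<close>
definition Mdom :: "(nat \<Rightarrow> complex) \<Rightarrow> nat \<Rightarrow> (real \<times> real) set" where
  "Mdom p d = {(s, \<theta>). regular_s p d s \<and> - (pi/2) < \<theta> \<and> \<theta> < pi/2 \<and>
       (\<exists>t. first_hit p d s \<theta> t) \<and> hit_pt p d s \<theta> \<notin> p ` {..<d}}"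

definition bmap :: "(nat \<Rightarrow> complex) \<Rightarrow> nat \<Rightarrow> real \<times> real \<Rightarrow> real \<times> real" where
  "bmap p d = (\<lambda>(s, \<theta>).
     let s' = arc_of p d (hit_pt p d s \<theta>);
         j = side_of p d s';
         v' = (tang p d j)\<^sup>2 * cnj (vel p d s \<theta>)
     in (s', Arg (v' / inormal p d j)))"

definition Rlam :: "real \<Rightarrow> real \<times> real \<Rightarrow> real \<times> real" where
  "Rlam lam = (\<lambda>(s, \<theta>). (s, lam * \<theta>))"

definition pinball :: "(nat \<Rightarrow> complex) \<Rightarrow> nat \<Rightarrow> real \<Rightarrow> real \<times> real \<Rightarrow> real \<times> real" where
  "pinball p d lam = Rlam lam \<circ> bmap p d"

definition periodic_orbit :: "(nat \<Rightarrow> complex) \<Rightarrow> nat \<Rightarrow> (real \<times> real \<Rightarrow> real \<times> real) \<Rightarrow> real \<times> real \<Rightarrow> bool" where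
  "periodic_orbit p d f q \<longleftrightarrow> (\<forall>k. (f ^^ k) q \<in> Mdom p d) \<and> (\<exists>n>0. (f ^^ n) q = q)"

definition itinerary :: "(nat \<Rightarrow> complex) \<Rightarrow> nat \<Rightarrow> (real \<times> real \<Rightarrow> real \<times> real) \<Rightarrow> real \<times> real \<Rightarrow> nat \<Rightarrow> nat" where
  "itinerary p d f q = (\<lambda>k. side_of p d (fst ((f ^^ k) q)))"

definition lam_plus_stable :: "(nat \<Rightarrow> complex) \<Rightarrow> nat \<Rightarrow> real \<times> real \<Rightarrow> bool" where
  "lam_plus_stable p d q \<longleftrightarrow> periodic_orbit p d (bmap p d) q \<and>
     (\<exists>lam :: nat \<Rightarrow> real. \<exists>qs :: nat \<Rightarrow> real \<times> real.
        (\<forall>n. 0 < lam n) \<and> (\<forall>n. lam (Suc n) < lam n) \<and> lam \<longlonglongrightarrow> 1 \<and>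
        (\<forall>n. periodic_orbit p d (pinball p d (lam n)) (qs n) \<and>
             itinerary p d (pinball p d (lam n)) (qs n) = itinerary p d (bmap p d) q) \<and>
        qs \<longlonglongrightarrow> q)"

definition lam_minus_stable :: "(nat \<Rightarrow> complex) \<Rightarrow> nat \<Rightarrow> real \<times> real \<Rightarrow> bool" where
  "lam_minus_stable p d q \<longleftrightarrow> periodic_orbit p d (bmap p d) q \<and>
     (\<exists>lam :: nat \<Rightarrow> real. \<exists>qs :: nat \<Rightarrow> real \<times> real.
        (\<forall>n. 0 < lam n) \<and> (\<forall>n. lam n < lam (Suc n)) \<and> lam \<longlonglongrightarrow> 1 \<and>
        (\<forall>n. periodic_orbit p d (pinball p d (lam n)) (qs n) \<and>
             itinerary p d (pinball p d (lam n)) (qs n) = itinerary p d (bmap p d) q) \<and>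
        qs \<longlonglongrightarrow> q)"

definition periodic_cylinder :: "(nat \<Rightarrow> complex) \<Rightarrow> nat \<Rightarrow> (real \<times> real) set \<Rightarrow> bool" where
  "periodic_cylinder p d C \<longleftrightarrow> (\<exists>q0. periodic_orbit p d (bmap p d) q0 \<and>
     C = {q. periodic_orbit p d (bmap p d) q \<and>
             (\<exists>k. itinerary p d (bmap p d) q = (\<lambda>j. itinerary p d (bmap p d) q0 (j + k)))})"

definition Srev :: "real \<times> real \<Rightarrow> real \<times> real" where
  "Srev = (\<lambda>(s, \<theta>). (s, - \<theta>))"

definition cyl_lam_plus_stable :: "(nat \<Rightarrow> complex) \<Rightarrow> nat \<Rightarrow> (real \<times> real) set \<Rightarrow> bool" where
  "cyl_lam_plus_stable p d C \<longleftrightarrow> (\<exists>q\<in>C. lam_plus_stable p d q)"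

definition cyl_lam_minus_stable :: "(nat \<Rightarrow> complex) \<Rightarrow> nat \<Rightarrow> (real \<times> real) set \<Rightarrow> bool" where
  "cyl_lam_minus_stable p d C \<longleftrightarrow> (\<exists>q\<in>C. lam_minus_stable p d q)"

end

theory Submission
  imports Defs "HOL-Complex_Analysis.Complex_Analysis"
begin


definition oseg :: "(nat \<Rightarrow> complex) \<Rightarrow> nat \<Rightarrow> nat \<Rightarrow> complex set" where
  "oseg p d i = open_segment (p i) (p (nxt d i))"

lemma sp_d: "simple_polygon p d \<Longrightarrow> 3 \<le> d"
  by (simp add: simple_polygon_def)

lemma nxt_lt: "0 < d \<Longrightarrow> nxt d i < d"
  by (simp add: nxt_def)

lemma svec_nz: assumes "simple_polygon p d" "i < d" shows "svec p d i \<noteq> 0"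
proof
  assume "svec p d i = 0"
  then have "Im (cnj (svec p d i) * svec p d (nxt d i)) = 0" by simp
  moreover have "Im (cnj (svec p d i) * svec p d (nxt d i)) \<noteq> 0"
    using assms unfolding simple_polygon_def by blast
  ultimately show False by blast
qed

lemma slen_pos: "simple_polygon p d \<Longrightarrow> i < d \<Longrightarrow> 0 < slen p d i"
  using svec_nz by (simp add: slen_def)

lemma ends_ne: "simple_polygon p d \<Longrightarrow> i < d \<Longrightarrow> p i \<noteq> p (nxt d i)"
  using svec_nz[of p d i] by (auto simp: svec_def)

lemma cum_Suc: "cum p d (Suc i) = cum p d i + slen p d i"
  by (simp add: cum_def)

lemma cum_mono: assumes "simple_polygon p d" "i \<le> k" "k \<le> d" shows "cum p d i \<le> cum p d k"
  using assms(2,3)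
proof (induction k)
  case 0 then show ?case by simp
next
  case (Suc k)
  show ?case
  proof (cases "i = Suc k")
    case False
    then have "cum p d i \<le> cum p d k" using Suc by simp
    moreover have "0 < slen p d k" using slen_pos[OF assms(1)] Suc by simp
    ultimately show ?thesis by (simp add: cum_Suc)
  qed simp
qed

lemma on_side_unique:
  assumes sp: "simple_polygon p d" and "on_side p d i s" "on_side p d k s" shows "i = k"
proof (rule ccontr)
  assume "i \<noteq> k"
  then consider "i < k" | "k < i" by linarith
  then show False
  proof cases
    case 1
    then have "cum p d (Suc i) \<le> cum p d k" using cum_mono[OF sp, of "Suc i" k] assms by (simp add: on_side_def)
    then show False using assms by (simp add: on_side_def)
  next
    case 2
    then have "cum p d (Suc k) \<le> cum p d i" using cum_mono[OF sp, of "Suc k" i] assms by (simp add: on_side_def)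
    then show False using assms by (simp add: on_side_def)
  qed
qed

lemma side_of_eq: "simple_polygon p d \<Longrightarrow> on_side p d i s \<Longrightarrow> side_of p d s = i"
  unfolding side_of_def using on_side_unique by blast

lemma regular_side: assumes "simple_polygon p d" "regular_s p d s" shows "on_side p d (side_of p d s) s"
proof -
  obtain i where i: "on_side p d i s" using assms(2) unfolding regular_s_def by blast
  then have "side_of p d s = i" using side_of_eq[OF assms(1)] by blast
  then show ?thesis using i by simp
qed

lemma norm_tang: "simple_polygon p d \<Longrightarrow> i < d \<Longrightarrow> cmod (tang p d i) = 1"
  using svec_nz[of p d i] by (simp add: tang_def slen_def norm_divide)

lemma norm_inormal: "simple_polygon p d \<Longrightarrow> i < d \<Longrightarrow> cmod (inormal p d i) = 1"
  using norm_tang by (simp add: inormal_def norm_mult)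

lemma svec_tang: "svec p d i = of_real (slen p d i) * tang p d i \<or> slen p d i = 0"
  by (auto simp: tang_def slen_def)

lemma pos_on_side:
  assumes sp: "simple_polygon p d" and os: "on_side p d i s"
  shows "pos p d s = p i + of_real (s - cum p d i) * tang p d i"
    and "pos p d s \<in> oseg p d i"
proof -
  have si: "side_of p d s = i" using side_of_eq[OF sp os] .
  show ps: "pos p d s = p i + of_real (s - cum p d i) * tang p d i"
    by (simp add: pos_def si)
  have il: "i < d" using os by (simp add: on_side_def)
  have L: "0 < slen p d i" using slen_pos[OF sp il] .
  define u where "u = (s - cum p d i) / slen p d i"
  have u: "0 < u" "u < 1" using os L by (auto simp: u_def on_side_def cum_Suc field_simps)
  have "pos p d s = (1 - u) *\<^sub>R p i + u *\<^sub>R p (nxt d i)"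
    using L unfolding ps u_def tang_def svec_def scaleR_conv_of_real
    by (simp add: field_simps)
  then show "pos p d s \<in> oseg p d i"
    unfolding oseg_def in_segment using u ends_ne[OF sp il] by blast
qed

lemma oseg_arc:
  assumes sp: "simple_polygon p d" and il: "i < d" and x: "x \<in> oseg p d i"
  shows "on_side p d i (cum p d i + cmod (x - p i))" and "pos p d (cum p d i + cmod (x - p i)) = x"
proof -
  obtain u where u: "0 < u" "u < 1" and xu: "x = (1 - u) *\<^sub>R p i + u *\<^sub>R p (nxt d i)"
    using x unfolding oseg_def in_segment by blast
  have L: "0 < slen p d i" using slen_pos[OF sp il] .
  have xe: "x - p i = of_real u * svec p d i"
    by (simp add: xu svec_def scaleR_conv_of_real algebra_simps)
  have nx: "cmod (x - p i) = u * slen p d i"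
    using u by (simp add: xe norm_mult slen_def)
  show os: "on_side p d i (cum p d i + cmod (x - p i))"
    using u L il by (simp add: on_side_def nx cum_Suc)
  have "pos p d (cum p d i + cmod (x - p i)) = p i + of_real (u * slen p d i) * tang p d i"
    using pos_on_side(1)[OF sp os] nx by simp
  also have "\<dots> = x" using L by (simp add: tang_def flip: xe)
  finally show "pos p d (cum p d i + cmod (x - p i)) = x" .
qed

lemma oseg_sseg_disj:
  assumes sp: "simple_polygon p d" and il: "i < d" and kl: "k < d" and ne: "i \<noteq> k"
  shows "oseg p d i \<inter> sseg p d k = {}"
proof -
  have H: "sseg p d i \<inter> sseg p d k \<subseteq> (if k = nxt d i then {p k} else {}) \<union> (if i = nxt d k then {p i} else {})"
    using sp il kl ne unfolding simple_polygon_def by blast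
  have "sseg p d i \<inter> sseg p d k \<subseteq> {p i, p (nxt d i)}"
  proof -
    have "(if k = nxt d i then {p k} else {}) \<union> (if i = nxt d k then {p i} else {}) \<subseteq> {p i, p (nxt d i)}"
      by auto
    then show ?thesis using H by blast
  qed
  moreover have "oseg p d i \<subseteq> sseg p d i - {p i, p (nxt d i)}"
    unfolding oseg_def sseg_def open_segment_def by auto
  ultimately show ?thesis by blast
qed

lemma oseg_bdry: "i < d \<Longrightarrow> oseg p d i \<subseteq> bdry p d"
  unfolding oseg_def bdry_def sseg_def open_segment_def by auto

lemma pos_inj:
  assumes sp: "simple_polygon p d" and "on_side p d i s" "on_side p d k s'" "pos p d s = pos p d s'"
  shows "s = s'"
proof -
  have il: "i < d" "k < d" using assms by (auto simp: on_side_def)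
  have A: "pos p d s \<in> oseg p d i" using pos_on_side(2)[OF sp assms(2)] .
  have B: "pos p d s \<in> sseg p d k" using pos_on_side(2)[OF sp assms(3)] assms(4)
    unfolding oseg_def sseg_def open_segment_def by simp
  have "i = k"
  proof (rule ccontr)
    assume "i \<noteq> k"
    then have "oseg p d i \<inter> sseg p d k = {}" using oseg_sseg_disj[OF sp il] by simp
    then show False using A B by blast
  qed
  then have "of_real (s - cum p d i) * tang p d i = of_real (s' - cum p d i) * tang p d i"
    using pos_on_side(1)[OF sp] assms by (metis add_left_cancel)
  moreover have "tang p d i \<noteq> 0" using norm_tang[OF sp il(1)] by auto
  ultimately show ?thesis by simp
qed

lemma arc_of_pos: assumes "simple_polygon p d" "on_side p d i s" shows "arc_of p d (pos p d s) = s"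
  unfolding arc_of_def
proof (rule the_equality)
  show "regular_s p d s \<and> pos p d s = pos p d s" using assms(2) by (auto simp: regular_s_def)
  fix s' assume "regular_s p d s' \<and> pos p d s' = pos p d s"
  then obtain k where k: "on_side p d k s'" "pos p d s' = pos p d s" by (auto simp: regular_s_def)
  show "s' = s" using pos_inj[OF assms(1) k(1) assms(2) k(2)] .
qed

lemma arc_of_oseg:
  assumes sp: "simple_polygon p d" and il: "i < d" and x: "x \<in> oseg p d i"
  shows "on_side p d i (arc_of p d x)" "pos p d (arc_of p d x) = x" "side_of p d (arc_of p d x) = i"
proof -
  let ?s = "cum p d i + cmod (x - p i)"
  have 1: "on_side p d i ?s" "pos p d ?s = x" using oseg_arc[OF assms] by auto
  have "arc_of p d x = ?s" using arc_of_pos[OF sp 1(1)] 1(2) by simp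
  then show "on_side p d i (arc_of p d x)" "pos p d (arc_of p d x) = x" "side_of p d (arc_of p d x) = i"
    using 1 side_of_eq[OF sp] by auto
qed

lemma bdry_nonvertex:
  assumes sp: "simple_polygon p d" and "x \<in> bdry p d" "x \<notin> p ` {..<d}"
  obtains j where "j < d" "x \<in> oseg p d j"
proof -
  obtain j where j: "j < d" "x \<in> sseg p d j" using assms(2) by (auto simp: bdry_def)
  have "nxt d j < d" using nxt_lt sp_d[OF sp] by simp
  then have "x \<noteq> p j" "x \<noteq> p (nxt d j)" using assms(3) j by auto
  then show ?thesis using that j unfolding oseg_def sseg_def open_segment_def by blast
qed

lemma first_hit_unique: assumes "first_hit p d s \<theta> t1" "first_hit p d s \<theta> t2" shows "t1 = t2"
proof (rule ccontr)
  assume "t1 \<noteq> t2"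
  then consider "t1 < t2" | "t2 < t1" by linarith
  then show False
  proof cases
    case 1
    have "0 < t1" "pos p d s + of_real t1 * vel p d s \<theta> \<in> bdry p d" using assms(1) by (auto simp: first_hit_def)
    moreover have "\<forall>t'. 0 < t' \<and> t' < t2 \<longrightarrow> pos p d s + of_real t' * vel p d s \<theta> \<notin> bdry p d"
      using assms(2) by (simp add: first_hit_def)
    ultimately show False using 1 by blast
  next
    case 2
    have "0 < t2" "pos p d s + of_real t2 * vel p d s \<theta> \<in> bdry p d" using assms(2) by (auto simp: first_hit_def)
    moreover have "\<forall>t'. 0 < t' \<and> t' < t1 \<longrightarrow> pos p d s + of_real t' * vel p d s \<theta> \<notin> bdry p d"
      using assms(1) by (simp add: first_hit_def)
    ultimately show False using 2 by blast
  qed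
qed

lemma hit_pt_eq: assumes "first_hit p d s \<theta> t" shows "hit_pt p d s \<theta> = pos p d s + of_real t * vel p d s \<theta>"
proof -
  have "(THE t. first_hit p d s \<theta> t) = t"
    by (rule the_equality) (use assms first_hit_unique in blast)+
  then show ?thesis by (simp add: hit_pt_def)
qed


lemma unit_cnj: "cmod t = 1 \<Longrightarrow> t * cnj t = 1"
  by (metis complex_norm_square mult.commute of_real_1 power_one)

lemma refl_alg:
  assumes t: "cmod t = 1"
  shows "(\<i> * t) * cnj (t\<^sup>2 * cnj v / (\<i> * t)) = - v"
proof -
  have tc: "t * cnj t = 1" using unit_cnj[OF t] .
  have t0: "t \<noteq> 0" using t by auto
  have "cnj (t\<^sup>2 * cnj v / (\<i> * t)) = (cnj t)^2 * v / (- \<i> * cnj t)"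
    by (simp add: power2_eq_square)
  also have "\<dots> = \<i> * cnj t * v" using t0 by (simp add: power2_eq_square field_simps)
  finally have eq: "cnj (t\<^sup>2 * cnj v / (\<i> * t)) = \<i> * cnj t * v" .
  have "(\<i> * t) * (\<i> * cnj t * v) = (\<i> * \<i>) * (t * cnj t) * v" by (simp add: algebra_simps)
  also have "\<dots> = - v" using tc by simp
  finally show ?thesis using eq by simp
qed

lemma refl_norm:
  assumes t: "cmod t = 1"
  shows "cmod (t\<^sup>2 * cnj v / (\<i> * t)) = cmod v"
  using t by (simp add: norm_mult norm_divide norm_power)

lemma unit_cis_Arg: "cmod w = 1 \<Longrightarrow> cis (- Arg w) = cnj w"
proof -
  assume w: "cmod w = 1"
  then have "w \<noteq> 0" by auto
  then have "cis (Arg w) = w" using cis_Arg[of w] w by (simp add: sgn_div_norm)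
  then show ?thesis by (metis cis_cnj)
qed

lemma back_refl:
  assumes t: "cmod t = 1" and th: "-(pi/2) < \<theta>" "\<theta> < pi/2"
  shows "Arg (t\<^sup>2 * cnj (- ((\<i> * t) * cis \<theta>)) / (\<i> * t)) = - \<theta>"
proof -
  have tc: "t * cnj t = 1" using unit_cnj[OF t] .
  have t0: "t \<noteq> 0" using t by auto
  have "t\<^sup>2 * cnj (- ((\<i> * t) * cis \<theta>)) / (\<i> * t) = (t * cnj t) * cis (- \<theta>)"
    using t0 by (simp add: power2_eq_square field_simps cis_cnj[symmetric])
  also have "\<dots> = cis (- \<theta>)" using tc by simp
  finally show ?thesis using th by (simp add: Arg_cis)
qed

lemma mdom_data:
  assumes sp: "simple_polygon p d" and y: "(s, \<theta>) \<in> Mdom p d"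
  obtains i j t where "i < d" "on_side p d i s" "side_of p d s = i"
    "-(pi/2) < \<theta>" "\<theta> < pi/2" "first_hit p d s \<theta> t" "j < d"
    "pos p d s + of_real t * vel p d s \<theta> \<in> oseg p d j"
    "on_side p d j (fst (bmap p d (s, \<theta>)))"
    "side_of p d (fst (bmap p d (s, \<theta>))) = j"
    "pos p d (fst (bmap p d (s, \<theta>))) = pos p d s + of_real t * vel p d s \<theta>"
    "snd (bmap p d (s, \<theta>)) = Arg ((tang p d j)\<^sup>2 * cnj (vel p d s \<theta>) / inormal p d j)"
    "vel p d s \<theta> = inormal p d i * cis \<theta>"
proof -
  have reg: "regular_s p d s" and th: "-(pi/2) < \<theta>" "\<theta> < pi/2"
    and fh: "\<exists>t. first_hit p d s \<theta> t" and nv: "hit_pt p d s \<theta> \<notin> p ` {..<d}"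
    using y by (auto simp: Mdom_def)
  define i where "i = side_of p d s"
  have osi: "on_side p d i s" using regular_side[OF sp reg] by (simp add: i_def)
  have il: "i < d" using osi by (simp add: on_side_def)
  obtain t where t: "first_hit p d s \<theta> t" using fh by blast
  have hp: "hit_pt p d s \<theta> = pos p d s + of_real t * vel p d s \<theta>" using hit_pt_eq[OF t] .
  have inb: "hit_pt p d s \<theta> \<in> bdry p d" using t hp by (simp add: first_hit_def)
  obtain j where j: "j < d" "hit_pt p d s \<theta> \<in> oseg p d j"
    using bdry_nonvertex[OF sp inb nv] by blast
  note A = arc_of_oseg[OF sp j]
  have fb: "fst (bmap p d (s, \<theta>)) = arc_of p d (hit_pt p d s \<theta>)"
    by (simp add: bmap_def Let_def)
  have sb: "snd (bmap p d (s, \<theta>)) = Arg ((tang p d j)\<^sup>2 * cnj (vel p d s \<theta>) / inormal p d j)"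
    using A(3) by (simp add: bmap_def Let_def)
  show ?thesis
    apply (rule that[of i t j])
    using il osi th t j A fb sb hp by (auto simp: i_def vel_def)
qed

lemma rev_lemma:
  assumes sp: "simple_polygon p d" and y: "y \<in> Mdom p d"
    and good: "-(pi/2) < snd (bmap p d y)" "snd (bmap p d y) < pi/2"
  shows "Srev (bmap p d y) \<in> Mdom p d" and "bmap p d (Srev (bmap p d y)) = Srev y"
proof -
  obtain s \<theta> where y_eq: "y = (s, \<theta>)" by (cases y)
  obtain i j t where il: "i < d" and osi: "on_side p d i s" and sid: "side_of p d s = i"
    and th: "-(pi/2) < \<theta>" "\<theta> < pi/2" and fh: "first_hit p d s \<theta> t" and jl: "j < d"
    and xj: "pos p d s + of_real t * vel p d s \<theta> \<in> oseg p d j"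
    and osj: "on_side p d j (fst (bmap p d (s, \<theta>)))"
    and sidj: "side_of p d (fst (bmap p d (s, \<theta>))) = j"
    and posj: "pos p d (fst (bmap p d (s, \<theta>))) = pos p d s + of_real t * vel p d s \<theta>"
    and snd_eq: "snd (bmap p d (s, \<theta>)) = Arg ((tang p d j)\<^sup>2 * cnj (vel p d s \<theta>) / inormal p d j)"
    and vel_eq: "vel p d s \<theta> = inormal p d i * cis \<theta>"
    using mdom_data[OF sp y[unfolded y_eq]] by blast
  define s' where "s' = fst (bmap p d (s, \<theta>))"
  define th' where "th' = snd (bmap p d (s, \<theta>))"
  define v where "v = vel p d s \<theta>"
  define x where "x = pos p d s"
  define w where "w = (tang p d j)\<^sup>2 * cnj v / inormal p d j"
  have bm: "bmap p d y = (s', th')" by (simp add: y_eq s'_def th'_def)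
  have Sb: "Srev (bmap p d y) = (s', - th')" by (simp add: bm Srev_def)
  have tj: "cmod (tang p d j) = 1" using norm_tang[OF sp jl] .
  have ti: "cmod (tang p d i) = 1" using norm_tang[OF sp il] .
  have nj: "inormal p d j = \<i> * tang p d j" by (simp add: inormal_def)
  have ni: "inormal p d i = \<i> * tang p d i" by (simp add: inormal_def)
  have vn: "cmod v = 1" using ti by (simp add: v_def vel_eq ni norm_mult)
  have wn: "cmod w = 1" using refl_norm[OF tj, of v] vn by (simp add: w_def nj)
  have th'w: "th' = Arg w" by (simp add: th'_def snd_eq w_def v_def)
  have vel': "vel p d s' (- th') = - v"
  proof -
    have "vel p d s' (- th') = inormal p d j * cis (- Arg w)"
      by (simp add: vel_def s'_def sidj th'w)
    also have "\<dots> = inormal p d j * cnj w" using unit_cis_Arg[OF wn] by simp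
    also have "\<dots> = - v" using refl_alg[OF tj, of v] by (simp add: w_def nj)
    finally show ?thesis .
  qed
  have pos': "pos p d s' = x + of_real t * v" by (simp add: s'_def posj x_def v_def)
  have xi: "x \<in> oseg p d i" using pos_on_side(2)[OF sp osi] by (simp add: x_def)
  have xb: "x \<in> bdry p d" using oseg_bdry[OF il] xi by blast
  have t0: "0 < t" using fh by (simp add: first_hit_def)
  have fh': "first_hit p d s' (- th') t"
    unfolding first_hit_def
  proof (intro conjI allI impI)
    show "0 < t" by fact
    show "pos p d s' + of_real t * vel p d s' (- th') \<in> bdry p d" using xb by (simp add: pos' vel')
    fix t' assume t': "0 < t' \<and> t' < t"
    have all: "\<forall>t'. 0 < t' \<and> t' < t \<longrightarrow> pos p d s + of_real t' * vel p d s \<theta> \<notin> bdry p d"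
      using fh unfolding first_hit_def by blast
    have "0 < t - t' \<and> t - t' < t" using t' by auto
    then have "pos p d s + of_real (t - t') * vel p d s \<theta> \<notin> bdry p d"
      using all[rule_format, of "t - t'"] by blast
    moreover have "pos p d s' + of_real t' * vel p d s' (- th') = pos p d s + of_real (t - t') * vel p d s \<theta>"
      by (simp add: pos' vel' x_def v_def algebra_simps)
    ultimately show "pos p d s' + of_real t' * vel p d s' (- th') \<notin> bdry p d" by simp
  qed
  have hp': "hit_pt p d s' (- th') = x"
    using hit_pt_eq[OF fh'] by (simp add: pos' vel')
  have xnv: "x \<notin> p ` {..<d}"
  proof
    assume "x \<in> p ` {..<d}"
    then obtain k where k: "k < d" "x = p k" by blast
    show False
    proof (cases "k = i")
      case True then show False using xi k unfolding oseg_def open_segment_def by auto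
    next
      case False
      then have "oseg p d i \<inter> sseg p d k = {}" using oseg_sseg_disj[OF sp il k(1)] by auto
      moreover have "p k \<in> sseg p d k" by (simp add: sseg_def)
      ultimately show False using xi k by blast
    qed
  qed
  have reg': "regular_s p d s'" using osj by (auto simp: regular_s_def s'_def)
  show "Srev (bmap p d y) \<in> Mdom p d"
    unfolding Sb Mdom_def using reg' good fh' hp' xnv by (auto simp: bm)
  have arcx: "arc_of p d x = s" using arc_of_pos[OF sp osi] by (simp add: x_def)
  have "bmap p d (s', - th') = (s, Arg ((tang p d i)\<^sup>2 * cnj (- v) / inormal p d i))"
    by (simp add: bmap_def Let_def hp' arcx sid vel')
  also have "Arg ((tang p d i)\<^sup>2 * cnj (- v) / inormal p d i) = - \<theta>"
    using back_refl[OF ti th] by (simp add: v_def vel_eq ni)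
  finally show "bmap p d (Srev (bmap p d y)) = Srev y" unfolding Sb by (simp add: y_eq Srev_def)
qed


definition good :: "(nat \<Rightarrow> complex) \<Rightarrow> nat \<Rightarrow> bool" where
  "good p d \<longleftrightarrow> (\<forall>y\<in>Mdom p d. -(pi/2) < snd (bmap p d y) \<and> snd (bmap p d y) < pi/2)"

lemma Rlam_1: "Rlam 1 = id" by (auto simp: Rlam_def)
lemma pinball_1: "pinball p d 1 = bmap p d" by (simp add: pinball_def Rlam_1)
lemma fst_Rlam[simp]: "fst (Rlam l y) = fst y" by (cases y) (simp add: Rlam_def)
lemma fst_Srev[simp]: "fst (Srev y) = fst y" by (cases y) (simp add: Srev_def)
lemma Srev_Rlam: "Srev (Rlam l y) = Rlam l (Srev y)" by (cases y) (simp add: Rlam_def Srev_def)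
lemma Rlam_inv: "l \<noteq> 0 \<Longrightarrow> Rlam (1/l) (Rlam l y) = y" by (cases y) (simp add: Rlam_def)
lemma Srev_Srev[simp]: "Srev (Srev y) = y" by (cases y) (simp add: Srev_def)

lemma iter_period:
  assumes "(f ^^ N) x = x" shows "(f ^^ (k + N * c)) x = (f ^^ k) x"
proof (induction c)
  case 0 then show ?case by simp
next
  case (Suc c)
  have e: "k + N * Suc c = (k + N * c) + N" by simp
  have "(f ^^ (k + N * Suc c)) x = (f ^^ (k + N * c)) ((f ^^ N) x)"
    unfolding e funpow_add comp_def ..
  then show ?case using Suc assms by simp
qed

lemma transfer:
  assumes sp: "simple_polygon p d" and G: "good p d" and l: "0 < l"
    and Mx: "\<forall>k. ((pinball p d l) ^^ k) x0 \<in> Mdom p d"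
    and N: "0 < N" "((pinball p d l) ^^ N) x0 = x0"
  shows "\<forall>m. ((pinball p d (1/l)) ^^ m) (Rlam (1/l) (Srev x0)) =
               Srev (bmap p d (((pinball p d l) ^^ ((N - 1) * (m + 1))) x0))"
    and "periodic_orbit p d (pinball p d (1/l)) (Rlam (1/l) (Srev x0))"
    and "\<forall>m. itinerary p d (pinball p d (1/l)) (Rlam (1/l) (Srev x0)) m =
               itinerary p d (pinball p d l) x0 ((N - 1) * (m + 1) + 1)"
proof -
  define P where "P = pinball p d l"
  define P' where "P' = pinball p d (1/l)"
  define X where "X k = (P ^^ k) x0" for k
  define T where "T y = Srev (bmap p d y)" for y
  have XS: "X (Suc k) = Rlam l (bmap p d (X k))" for k by (simp add: X_def P_def pinball_def)
  have XM: "X k \<in> Mdom p d" for k using Mx by (simp add: X_def P_def)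
  have XP: "X (k + N * c) = X k" for k c using iter_period[OF N(2)] by (simp add: X_def P_def)
  have gd: "-(pi/2) < snd (bmap p d (X k)) \<and> snd (bmap p d (X k)) < pi/2" for k
    using G XM unfolding good_def by blast
  have TM: "T (X k) \<in> Mdom p d" for k using rev_lemma(1)[OF sp XM gd[THEN conjunct1] gd[THEN conjunct2]] by (simp add: T_def)
  have step: "P' (T (X (Suc k))) = T (X k)" for k
  proof -
    have "bmap p d (T (X (Suc k))) = Srev (X (Suc k))"
      using rev_lemma(2)[OF sp XM gd[THEN conjunct1] gd[THEN conjunct2]] by (simp add: T_def)
    then have "P' (T (X (Suc k))) = Rlam (1/l) (Srev (X (Suc k)))" by (simp add: P'_def pinball_def)
    also have "\<dots> = Srev (Rlam (1/l) (Rlam l (bmap p d (X k))))" by (simp add: Srev_Rlam XS)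
    also have "\<dots> = T (X k)" using l by (simp add: Rlam_inv T_def)
    finally show ?thesis .
  qed
  have N1: "N = Suc (N - 1)" using N(1) by simp
  have base: "Rlam (1/l) (Srev x0) = T (X (N - 1))"
  proof -
    have "x0 = X (Suc (N - 1))" using N N1 by (simp add: X_def P_def)
    then have "Rlam (1/l) (Srev x0) = Srev (Rlam (1/l) (Rlam l (bmap p d (X (N - 1)))))"
      by (simp add: XS Srev_Rlam)
    also have "\<dots> = T (X (N - 1))" using l by (simp add: Rlam_inv T_def)
    finally show ?thesis .
  qed
  have orb: "(P' ^^ m) (Rlam (1/l) (Srev x0)) = T (X ((N - 1) * (m + 1)))" for m
  proof (induction m)
    case 0 then show ?case using base by simp
  next
    case (Suc m)
    obtain N' where N': "N = Suc N'" using N(1) gr0_implies_Suc by blast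
    have a: "Suc ((N - 1) * (Suc m + 1)) = (N - 1) * (m + 1) + N * 1"
      unfolding N' by (simp add: algebra_simps)
    have "X (Suc ((N - 1) * (Suc m + 1))) = X ((N - 1) * (m + 1))"
      unfolding a by (rule XP)
    then have "(P' ^^ Suc m) (Rlam (1/l) (Srev x0)) = P' (T (X (Suc ((N - 1) * (Suc m + 1)))))"
      using Suc by simp
    also have "\<dots> = T (X ((N - 1) * (Suc m + 1)))" by (rule step)
    finally show ?case .
  qed
  show "\<forall>m. ((pinball p d (1/l)) ^^ m) (Rlam (1/l) (Srev x0)) =
               Srev (bmap p d (((pinball p d l) ^^ ((N - 1) * (m + 1))) x0))"
    using orb by (simp add: P'_def T_def X_def P_def)
  have perN: "(P' ^^ N) (Rlam (1/l) (Srev x0)) = Rlam (1/l) (Srev x0)"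
  proof -
    obtain N' where N': "N = Suc N'" using N(1) gr0_implies_Suc by blast
    have "(N - 1) * (N + 1) = (N - 1) + N * (N - 1)"
      unfolding N' by (simp add: algebra_simps)
    then have "X ((N - 1) * (N + 1)) = X (N - 1)" using XP[of "N - 1" "N - 1"] by (simp add: mult.commute)
    then show ?thesis using orb base by simp
  qed
  show "periodic_orbit p d (pinball p d (1/l)) (Rlam (1/l) (Srev x0))"
    unfolding periodic_orbit_def using orb TM perN N(1) by (auto simp: P'_def)
  show "\<forall>m. itinerary p d (pinball p d (1/l)) (Rlam (1/l) (Srev x0)) m =
               itinerary p d (pinball p d l) x0 ((N - 1) * (m + 1) + 1)"
  proof
    fix m
    have "fst ((P' ^^ m) (Rlam (1/l) (Srev x0))) = fst (X ((N - 1) * (m + 1) + 1))"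
      using orb[of m] by (simp add: T_def XS)
    then show "itinerary p d (pinball p d (1/l)) (Rlam (1/l) (Srev x0)) m =
               itinerary p d (pinball p d l) x0 ((N - 1) * (m + 1) + 1)"
      by (simp add: itinerary_def P'_def X_def P_def)
  qed
qed

lemma itin_period:
  assumes "((f ^^ N) x) = x" shows "itinerary p d f x (k + N * c) = itinerary p d f x k"
  using iter_period[OF assms] by (simp add: itinerary_def)

lemma stab_transfer:
  assumes sp: "simple_polygon p d" and G: "good p d"
    and q: "periodic_orbit p d (bmap p d) q"
    and lpos: "\<forall>n. 0 < lam n" and ll: "lam \<longlonglongrightarrow> 1"
    and qs: "\<forall>n. periodic_orbit p d (pinball p d (lam n)) (qs n) \<and>
             itinerary p d (pinball p d (lam n)) (qs n) = itinerary p d (bmap p d) q"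
    and qq: "qs \<longlonglongrightarrow> q"
  shows "periodic_orbit p d (bmap p d) (Srev q)"
    and "\<forall>n. periodic_orbit p d (pinball p d (1 / lam n)) (Rlam (1 / lam n) (Srev (qs n))) \<and>
             itinerary p d (pinball p d (1 / lam n)) (Rlam (1 / lam n) (Srev (qs n))) = itinerary p d (bmap p d) (Srev q)"
    and "(\<lambda>n. Rlam (1 / lam n) (Srev (qs n))) \<longlonglongrightarrow> Srev q"
proof -
  obtain M where M: "0 < M" "(bmap p d ^^ M) q = q" and Mq: "\<forall>k. (bmap p d ^^ k) q \<in> Mdom p d"
    using q unfolding periodic_orbit_def by blast
  have q1: "\<forall>k. (pinball p d 1 ^^ k) q \<in> Mdom p d" "(pinball p d 1 ^^ M) q = q"
    using Mq M by (simp_all add: pinball_1)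
  note T1 = transfer[OF sp G zero_less_one q1(1) M(1) q1(2)]
  have R1: "Rlam (1/1) (Srev q) = Srev q" by (simp add: Rlam_1)
  show "periodic_orbit p d (bmap p d) (Srev q)" using T1(2) by (simp add: Rlam_1 pinball_1)
  have itS: "itinerary p d (bmap p d) (Srev q) m = itinerary p d (bmap p d) q ((M - 1) * (m + 1) + 1)" for m
    using T1(3) by (simp add: Rlam_1 pinball_1)
  show "\<forall>n. periodic_orbit p d (pinball p d (1 / lam n)) (Rlam (1 / lam n) (Srev (qs n))) \<and>
             itinerary p d (pinball p d (1 / lam n)) (Rlam (1 / lam n) (Srev (qs n))) = itinerary p d (bmap p d) (Srev q)"
  proof
    fix n
    obtain N where N: "0 < N" "(pinball p d (lam n) ^^ N) (qs n) = qs n"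
      and NM: "\<forall>k. (pinball p d (lam n) ^^ k) (qs n) \<in> Mdom p d"
      using qs unfolding periodic_orbit_def by blast
    note Tn = transfer[OF sp G lpos[rule_format, of n] NM N]
    define I where "I = itinerary p d (bmap p d) q"
    have IN: "I (k + N * c) = I k" for k c
      using itin_period[OF N(2), of p d k c] qs unfolding I_def by metis
    have IM: "I (k + M * c) = I k" for k c
      using itin_period[OF M(2), of p d k c] unfolding I_def by simp
    have "I ((N - 1) * (m + 1) + 1) = I ((M - 1) * (m + 1) + 1)" for m
    proof -
      obtain N' where N': "N = Suc N'" using N(1) gr0_implies_Suc by blast
      obtain M' where M': "M = Suc M'" using M(1) gr0_implies_Suc by blast
      have e: "(N - 1) * (m + 1) + 1 + N * ((m + 1) * (M - 1)) = (M - 1) * (m + 1) + 1 + M * ((m + 1) * (N - 1))"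
        unfolding N' M' by (simp add: algebra_simps)
      have "I ((N - 1) * (m + 1) + 1) = I ((N - 1) * (m + 1) + 1 + N * ((m + 1) * (M - 1)))" by (rule IN[symmetric])
      also have "\<dots> = I ((M - 1) * (m + 1) + 1 + M * ((m + 1) * (N - 1)))" using e by simp
      also have "\<dots> = I ((M - 1) * (m + 1) + 1)" by (rule IM)
      finally show ?thesis .
    qed
    then have "itinerary p d (pinball p d (1 / lam n)) (Rlam (1 / lam n) (Srev (qs n))) m = itinerary p d (bmap p d) (Srev q) m" for m
      using Tn(3) qs itS unfolding I_def by simp
    then show "periodic_orbit p d (pinball p d (1 / lam n)) (Rlam (1 / lam n) (Srev (qs n))) \<and>
             itinerary p d (pinball p d (1 / lam n)) (Rlam (1 / lam n) (Srev (qs n))) = itinerary p d (bmap p d) (Srev q)"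
      using Tn(2) by auto
  qed
  have e: "Rlam (1 / lam n) (Srev (qs n)) = (fst (qs n), (1 / lam n) * (- snd (qs n)))" for n
    by (cases "qs n") (simp add: Rlam_def Srev_def)
  have eq: "Srev q = (fst q, (1 / 1) * (- snd q))" by (cases q) (simp add: Srev_def)
  have "(\<lambda>n. (fst (qs n), (1 / lam n) * (- snd (qs n)))) \<longlonglongrightarrow> (fst q, (1 / 1) * (- snd q))"
    by (intro tendsto_Pair tendsto_mult tendsto_divide tendsto_minus tendsto_fst tendsto_snd qq ll tendsto_const) simp
  then show "(\<lambda>n. Rlam (1 / lam n) (Srev (qs n))) \<longlonglongrightarrow> Srev q" unfolding e eq .
qed

lemma main_from_good:
  assumes sp: "simple_polygon p d" and G: "good p d"
  shows "cyl_lam_minus_stable p d C \<longleftrightarrow> cyl_lam_plus_stable p d (Srev ` C)"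
proof
  assume "cyl_lam_minus_stable p d C"
  then obtain q lam qs where qC: "q \<in> C" and q: "periodic_orbit p d (bmap p d) q"
    and lpos: "\<forall>n. 0 < lam n" and inc: "\<forall>n. lam n < lam (Suc n)" and ll: "lam \<longlonglongrightarrow> 1"
    and qs: "\<forall>n. periodic_orbit p d (pinball p d (lam n)) (qs n) \<and>
             itinerary p d (pinball p d (lam n)) (qs n) = itinerary p d (bmap p d) q"
    and qq: "qs \<longlonglongrightarrow> q"
    unfolding cyl_lam_minus_stable_def lam_minus_stable_def by blast
  note S = stab_transfer[OF sp G q lpos ll qs qq]
  have "lam_plus_stable p d (Srev q)"
    unfolding lam_plus_stable_def
  proof (intro conjI exI)
    show "periodic_orbit p d (bmap p d) (Srev q)" by (rule S(1))
    show "\<forall>n. 0 < 1 / lam n" using lpos by simp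
    show "\<forall>n. 1 / lam (Suc n) < 1 / lam n" using lpos inc by (simp add: frac_less2)
    show "(\<lambda>n. 1 / lam n) \<longlonglongrightarrow> 1" using tendsto_divide[OF tendsto_const ll, of 1] by simp
    show "\<forall>n. periodic_orbit p d (pinball p d (1 / lam n)) (Rlam (1 / lam n) (Srev (qs n))) \<and>
             itinerary p d (pinball p d (1 / lam n)) (Rlam (1 / lam n) (Srev (qs n))) = itinerary p d (bmap p d) (Srev q)"
      by (rule S(2))
    show "(\<lambda>n. Rlam (1 / lam n) (Srev (qs n))) \<longlonglongrightarrow> Srev q" by (rule S(3))
  qed
  then show "cyl_lam_plus_stable p d (Srev ` C)" using qC unfolding cyl_lam_plus_stable_def by blast
next
  assume "cyl_lam_plus_stable p d (Srev ` C)"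
  then obtain q' lam qs where qC: "q' \<in> Srev ` C" and q: "periodic_orbit p d (bmap p d) q'"
    and lpos: "\<forall>n. 0 < lam n" and dec: "\<forall>n. lam (Suc n) < lam n" and ll: "lam \<longlonglongrightarrow> 1"
    and qs: "\<forall>n. periodic_orbit p d (pinball p d (lam n)) (qs n) \<and>
             itinerary p d (pinball p d (lam n)) (qs n) = itinerary p d (bmap p d) q'"
    and qq: "qs \<longlonglongrightarrow> q'"
    unfolding cyl_lam_plus_stable_def lam_plus_stable_def by blast
  note S = stab_transfer[OF sp G q lpos ll qs qq]
  have "lam_minus_stable p d (Srev q')"
    unfolding lam_minus_stable_def
  proof (intro conjI exI)
    show "periodic_orbit p d (bmap p d) (Srev q')" by (rule S(1))
    show "\<forall>n. 0 < 1 / lam n" using lpos by simp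
    show "\<forall>n. 1 / lam n < 1 / lam (Suc n)" using lpos dec by (simp add: frac_less2)
    show "(\<lambda>n. 1 / lam n) \<longlonglongrightarrow> 1" using tendsto_divide[OF tendsto_const ll, of 1] by simp
    show "\<forall>n. periodic_orbit p d (pinball p d (1 / lam n)) (Rlam (1 / lam n) (Srev (qs n))) \<and>
             itinerary p d (pinball p d (1 / lam n)) (Rlam (1 / lam n) (Srev (qs n))) = itinerary p d (bmap p d) (Srev q')"
      by (rule S(2))
    show "(\<lambda>n. Rlam (1 / lam n) (Srev (qs n))) \<longlonglongrightarrow> Srev q'" by (rule S(3))
  qed
  moreover have "Srev q' \<in> C" using qC by auto
  ultimately show "cyl_lam_minus_stable p d C" unfolding cyl_lam_minus_stable_def by blast
qed


definition sg :: "(nat \<Rightarrow> complex) \<Rightarrow> nat \<Rightarrow> nat \<Rightarrow> real \<Rightarrow> complex" where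
  "sg p d k = linepath (p k) (p (nxt d k))"

primrec chain :: "(nat \<Rightarrow> complex) \<Rightarrow> nat \<Rightarrow> nat \<Rightarrow> nat \<Rightarrow> real \<Rightarrow> complex" where
  "chain p d k 0 = sg p d k"
| "chain p d k (Suc n) = sg p d k +++ chain p d (Suc k) n"

lemma nxt_Suc: "Suc k < d \<Longrightarrow> nxt d k = Suc k" by (simp add: nxt_def)
lemma nxt_last: "0 < d \<Longrightarrow> nxt d (d - 1) = 0" by (simp add: nxt_def)

lemma chain_basic:
  assumes "k + n < d"
  shows "path (chain p d k n) \<and> pathstart (chain p d k n) = p k \<and>
         pathfinish (chain p d k n) = p (nxt d (k + n)) \<and>
         path_image (chain p d k n) = (\<Union>j\<in>{k..k+n}. sseg p d j)"
  using assms
proof (induction n arbitrary: k)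
  case 0 then show ?case by (simp add: sg_def sseg_def)
next
  case (Suc n)
  have IH: "path (chain p d (Suc k) n) \<and> pathstart (chain p d (Suc k) n) = p (Suc k) \<and>
         pathfinish (chain p d (Suc k) n) = p (nxt d (Suc k + n)) \<and>
         path_image (chain p d (Suc k) n) = (\<Union>j\<in>{Suc k..Suc k+n}. sseg p d j)"
    using Suc by simp
  have nk: "nxt d k = Suc k" using Suc.prems by (simp add: nxt_Suc)
  have ps: "pathfinish (sg p d k) = pathstart (chain p d (Suc k) n)" using IH nk by (simp add: sg_def)
  have "{k..k + Suc n} = insert k {Suc k..Suc k + n}" by auto
  then have "(\<Union>j\<in>{k..k+Suc n}. sseg p d j) = sseg p d k \<union> (\<Union>j\<in>{Suc k..Suc k+n}. sseg p d j)" by simp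
  then show ?case using IH ps by (simp add: sg_def sseg_def path_image_join)
qed

lemma chain_wn:
  assumes "k + n < d" "z \<notin> path_image (chain p d k n)"
  shows "winding_number (chain p d k n) z = (\<Sum>j\<in>{k..k+n}. winding_number (sg p d j) z)"
  using assms
proof (induction n arbitrary: k)
  case 0 then show ?case by simp
next
  case (Suc n)
  have B: "path (chain p d (Suc k) n) \<and> pathstart (chain p d (Suc k) n) = p (Suc k) \<and>
         pathfinish (chain p d (Suc k) n) = p (nxt d (Suc k + n)) \<and>
         path_image (chain p d (Suc k) n) = (\<Union>j\<in>{Suc k..Suc k+n}. sseg p d j)"
    using chain_basic[of "Suc k" n d p] Suc.prems by simp
  have nk: "nxt d k = Suc k" using Suc.prems by (simp add: nxt_Suc)
  have ps: "pathfinish (sg p d k) = pathstart (chain p d (Suc k) n)" using B nk by (simp add: sg_def)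
  have z1: "z \<notin> path_image (sg p d k)" and z2: "z \<notin> path_image (chain p d (Suc k) n)"
    using Suc.prems(2) ps B by (auto simp: path_image_join)
  have "winding_number (chain p d k (Suc n)) z = winding_number (sg p d k) z + winding_number (chain p d (Suc k) n) z"
    using winding_number_join[of "sg p d k" z "chain p d (Suc k) n"] z1 z2 B ps by (simp add: sg_def)
  also have "\<dots> = winding_number (sg p d k) z + (\<Sum>j\<in>{Suc k..Suc k+n}. winding_number (sg p d j) z)"
    using Suc.IH[of "Suc k"] Suc.prems z2 by simp
  also have "\<dots> = (\<Sum>j\<in>{k..k+Suc n}. winding_number (sg p d j) z)"
  proof -
    have "{k..k + Suc n} = insert k {Suc k..Suc k + n}" by auto
    then show ?thesis by simp
  qed
  finally show ?case .
qed

lemma sseg_inter: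
  assumes sp: "simple_polygon p d" and "i < d" "j < d" "i \<noteq> j" "j \<noteq> nxt d i" "i \<noteq> nxt d j"
  shows "sseg p d i \<inter> sseg p d j = {}"
proof -
  have "sseg p d i \<inter> sseg p d j \<subseteq> (if j = nxt d i then {p j} else {}) \<union> (if i = nxt d j then {p i} else {})"
    using assms unfolding simple_polygon_def by blast
  then show ?thesis using assms by simp
qed

lemma sseg_inter_nxt:
  assumes sp: "simple_polygon p d" and "i < d" "j < d" "i \<noteq> j" "j = nxt d i" "i \<noteq> nxt d j"
  shows "sseg p d i \<inter> sseg p d j \<subseteq> {p j}"
proof -
  have "sseg p d i \<inter> sseg p d j \<subseteq> (if j = nxt d i then {p j} else {}) \<union> (if i = nxt d j then {p i} else {})"
    using assms unfolding simple_polygon_def by blast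
  then show ?thesis using assms by simp
qed

lemma chain_arc:
  assumes sp: "simple_polygon p d" and "1 \<le> k" "k + n < d"
  shows "arc (chain p d k n)"
  using assms(2,3)
proof (induction n arbitrary: k)
  case 0 then show ?case using ends_ne[OF sp, of k] by (simp add: sg_def)
next
  case (Suc n)
  have d3: "3 \<le> d" using sp_d[OF sp] .
  have B: "path (chain p d (Suc k) n) \<and> pathstart (chain p d (Suc k) n) = p (Suc k) \<and>
         pathfinish (chain p d (Suc k) n) = p (nxt d (Suc k + n)) \<and>
         path_image (chain p d (Suc k) n) = (\<Union>j\<in>{Suc k..Suc k+n}. sseg p d j)"
    using chain_basic[of "Suc k" n d p] Suc.prems by simp
  have nk: "nxt d k = Suc k" using Suc.prems by (simp add: nxt_Suc)
  have a1: "arc (sg p d k)" using ends_ne[OF sp, of k] Suc.prems by (simp add: sg_def)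
  have a2: "arc (chain p d (Suc k) n)" using Suc.IH[of "Suc k"] Suc.prems by simp
  have ps: "pathfinish (sg p d k) = pathstart (chain p d (Suc k) n)" using B nk by (simp add: sg_def)
  have "sseg p d k \<inter> sseg p d j \<subseteq> {p (Suc k)}" if j: "j \<in> {Suc k..Suc k+n}" for j
  proof (cases "j = Suc k")
    case True
    have "k \<noteq> nxt d j"
    proof (cases "Suc (Suc k) < d")
      case True2: True
      then show ?thesis using True by (simp add: nxt_def)
    next
      case False
      then have "Suc (Suc k) = d" using Suc.prems by simp
      then show ?thesis using True Suc.prems by (simp add: nxt_def)
    qed
    then show ?thesis using sseg_inter_nxt[OF sp, of k j] True Suc.prems nk by simp
  next
    case False
    have "k \<noteq> nxt d j"
    proof (cases "Suc j < d")
      case True then show ?thesis using j by (simp add: nxt_Suc)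
    next
      case False
      then have "Suc j = d" using j Suc.prems by simp
      then have "nxt d j = 0" by (simp add: nxt_def)
      then show ?thesis using Suc.prems by simp
    qed
    then show ?thesis using sseg_inter[OF sp, of k j] False Suc.prems nk j by auto
  qed
  moreover have "path_image (sg p d k) = sseg p d k" by (simp add: sg_def sseg_def)
  ultimately have "path_image (sg p d k) \<inter> path_image (chain p d (Suc k) n) \<subseteq> {p (Suc k)}"
    using B by blast
  then have "path_image (sg p d k) \<inter> path_image (chain p d (Suc k) n) \<subseteq> {pathstart (chain p d (Suc k) n)}"
    using B by simp
  then show ?case using arc_join[OF a1 a2 ps] by simp
qed

definition gam :: "(nat \<Rightarrow> complex) \<Rightarrow> nat \<Rightarrow> real \<Rightarrow> complex" where
  "gam p d = chain p d 0 (d - 1)"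

lemma gam_props:
  assumes sp: "simple_polygon p d"
  shows "simple_path (gam p d)" "path (gam p d)" "pathfinish (gam p d) = pathstart (gam p d)"
    "path_image (gam p d) = bdry p d"
    "\<And>z. z \<notin> bdry p d \<Longrightarrow> winding_number (gam p d) z = (\<Sum>j<d. winding_number (sg p d j) z)"
proof -
  have d3: "3 \<le> d" using sp_d[OF sp] .
  have B: "path (gam p d) \<and> pathstart (gam p d) = p 0 \<and>
         pathfinish (gam p d) = p (nxt d (0 + (d - 1))) \<and>
         path_image (gam p d) = (\<Union>j\<in>{0..0+(d - 1)}. sseg p d j)"
    unfolding gam_def using chain_basic[of 0 "d - 1" d p] d3 by simp
  have iv: "{0..0 + (d - 1)} = {..<d}" using d3 by auto
  show "path (gam p d)" using B by simp
  show "pathfinish (gam p d) = pathstart (gam p d)" using B d3 nxt_last[of d] by simp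
  show pim: "path_image (gam p d) = bdry p d" using B iv by (simp add: bdry_def)
  show "winding_number (gam p d) z = (\<Sum>j<d. winding_number (sg p d j) z)" if "z \<notin> bdry p d" for z
    using chain_wn[of 0 "d - 1" d z p] that d3 pim iv by (simp add: gam_def)
  have dd: "d - 1 = Suc (d - 2)" using d3 by simp
  have g: "gam p d = sg p d 0 +++ chain p d 1 (d - 2)" unfolding gam_def dd by simp
  have a1: "arc (sg p d 0)" using ends_ne[OF sp, of 0] d3 by (simp add: sg_def)
  have a2: "arc (chain p d 1 (d - 2))" using chain_arc[OF sp, of 1 "d - 2"] d3 by simp
  have C: "path (chain p d 1 (d - 2)) \<and> pathstart (chain p d 1 (d - 2)) = p 1 \<and>
         pathfinish (chain p d 1 (d - 2)) = p (nxt d (1 + (d - 2))) \<and>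
         path_image (chain p d 1 (d - 2)) = (\<Union>j\<in>{1..1+(d - 2)}. sseg p d j)"
    using chain_basic[of 1 "d - 2" d p] d3 by simp
  have n0: "nxt d 0 = 1" using d3 by (simp add: nxt_def)
  have "Suc (1 + (d - 2)) = d" using d3 by simp
  then have nl: "nxt d (1 + (d - 2)) = 0" by (simp add: nxt_def)
  have "sseg p d 0 \<inter> sseg p d j \<subseteq> {p 0, p 1}" if j: "j \<in> {1..1+(d - 2)}" for j
  proof -
    have jd: "j < d" "0 \<noteq> j" "(0::nat) < d" using j d3 by auto
    have "sseg p d 0 \<inter> sseg p d j \<subseteq> (if j = nxt d 0 then {p j} else {}) \<union> (if 0 = nxt d j then {p 0} else {})"
      using sp jd unfolding simple_polygon_def by blast
    then show ?thesis using n0 by (auto split: if_splits)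
  qed
  moreover have "path_image (sg p d 0) = sseg p d 0" by (simp add: sg_def sseg_def)
  ultimately have "path_image (sg p d 0) \<inter> path_image (chain p d 1 (d - 2)) \<subseteq> {p 0, p 1}"
    using C by blast
  then have "path_image (sg p d 0) \<inter> path_image (chain p d 1 (d - 2)) \<subseteq> {pathstart (sg p d 0), pathstart (chain p d 1 (d - 2))}"
    using C by (simp add: sg_def)
  moreover have "pathfinish (sg p d 0) = pathstart (chain p d 1 (d - 2))" using C n0 by (simp add: sg_def)
  moreover have "pathfinish (chain p d 1 (d - 2)) = pathstart (sg p d 0)" using C nl by (simp add: sg_def)
  ultimately show "simple_path (gam p d)" unfolding g using simple_path_join_loop[OF a1 a2] by blast
qed


definition fL :: "(nat \<Rightarrow> complex) \<Rightarrow> nat \<Rightarrow> nat \<Rightarrow> complex \<Rightarrow> real" where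
  "fL p d i z = Im (cnj (svec p d i) * (z - p i))"

lemma fL_inner: "fL p d i z = inner (\<i> * svec p d i) z - inner (\<i> * svec p d i) (p i)"
  by (simp add: fL_def inner_complex_def algebra_simps)

lemma fL_add: "fL p d i (z + w) = fL p d i z + Im (cnj (svec p d i) * w)"
  by (simp add: fL_def algebra_simps)

lemma im_cnj_ie: "Im (cnj e * (of_real c * (\<i> * e))) = c * (cmod e)^2"
  unfolding cmod_power2 by (simp add: algebra_simps power2_eq_square)

lemma fL_seg: assumes "z \<in> sseg p d i" shows "fL p d i z = 0"
proof -
  obtain u where z: "z = (1 - u) *\<^sub>R p i + u *\<^sub>R p (nxt d i)"
    using assms unfolding sseg_def in_segment by blast
  have "z - p i = of_real u * svec p d i" by (simp add: z svec_def scaleR_conv_of_real algebra_simps)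
  then show ?thesis by (simp add: fL_def algebra_simps)
qed

lemma im_ident1: "Im ((b - a) * cnj (b - z)) = Im (cnj (b - a) * (z - a))"
  by (simp add: algebra_simps)
lemma im_ident2: "Im ((a - b) * cnj (a - z)) = - Im (cnj (b - a) * (z - a))"
  by (simp add: algebra_simps)

lemma away:
  assumes sp: "simple_polygon p d" and il: "i < d" and y: "y \<in> oseg p d i"
  obtains r where "0 < r" "\<And>z k. z \<in> ball y r \<Longrightarrow> k < d \<Longrightarrow> k \<noteq> i \<Longrightarrow> z \<notin> sseg p d k"
proof -
  define U where "U = (\<Union>k\<in>{k. k < d \<and> k \<noteq> i}. sseg p d k)"
  have "closed U" unfolding U_def sseg_def by (intro closed_UN) auto
  moreover have "y \<notin> U" using oseg_sseg_disj[OF sp il] y unfolding U_def by blast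
  ultimately obtain r where "0 < r" "ball y r \<subseteq> - U"
    using open_contains_ball_eq[of "- U" y] by (auto simp: open_Compl)
  then show ?thesis using that unfolding U_def by blast
qed

lemma offpath:
  assumes "i < d" "\<And>k. k < d \<Longrightarrow> k \<noteq> i \<Longrightarrow> z \<notin> sseg p d k" "fL p d i z \<noteq> 0"
  shows "z \<notin> bdry p d"
proof
  assume "z \<in> bdry p d"
  then obtain k where k: "k < d" "z \<in> sseg p d k" by (auto simp: bdry_def)
  show False
  proof (cases "k = i")
    case True then show False using fL_seg k assms(3) by blast
  next
    case False then show False using assms(2) k by blast
  qed
qed

lemma nonzero_pt:
  assumes "open S" "z1 \<in> S" "z1 \<in> ball y r" "svec p d i \<noteq> 0"
  obtains z where "z \<in> S" "z \<in> ball y r" "fL p d i z \<noteq> 0"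
proof -
  obtain \<rho> where \<rho>: "0 < \<rho>" "ball z1 \<rho> \<subseteq> S \<inter> ball y r"
    using open_contains_ball_eq[of "S \<inter> ball y r" z1] assms by auto
  show ?thesis
  proof (cases "fL p d i z1 = 0")
    case False then show ?thesis using that assms by blast
  next
    case True
    define e where "e = svec p d i"
    define c where "c = \<rho> / (2 * cmod e)"
    define z2 where "z2 = z1 + of_real c * (\<i> * e)"
    have ne: "0 < cmod e" using assms(4) by (simp add: e_def)
    have c0: "0 \<le> c" using ne \<rho> by (simp add: c_def)
    have "dist z1 z2 = cmod (of_real c * (\<i> * e))" by (simp add: z2_def dist_norm)
    also have "\<dots> = c * cmod e" using c0 by (simp add: norm_mult)
    also have "\<dots> = \<rho> / 2" using ne by (simp add: c_def)
    finally have "z2 \<in> ball z1 \<rho>" using \<rho> by simp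
    moreover have "fL p d i z2 = c * (cmod e)^2" using True
      unfolding z2_def e_def fL_add im_cnj_ie by simp
    moreover have "0 < c * (cmod e)^2" using ne \<rho> by (simp add: c_def)
    ultimately show ?thesis using that \<rho> by (metis IntE less_irrefl subsetD)
  qed
qed

lemma local_side:
  assumes sp: "simple_polygon p d" and il: "i < d" and y: "y \<in> oseg p d i"
    and sig: "\<sigma> = 1 \<or> \<sigma> = -1"
    and ins: "\<And>z. z \<in> inside (bdry p d) \<Longrightarrow> winding_number (gam p d) z = \<sigma>"
    and out: "\<And>z. z \<in> outside (bdry p d) \<Longrightarrow> winding_number (gam p d) z = 0"
  obtains r where "0 < r"
    "\<And>z. z \<in> ball y r \<Longrightarrow> fL p d i z > 0 \<Longrightarrow> z \<notin> bdry p d \<and> winding_number (gam p d) z = (if \<sigma> = 1 then 1 else 0)"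
    "\<And>z. z \<in> ball y r \<Longrightarrow> fL p d i z < 0 \<Longrightarrow> z \<notin> bdry p d \<and> winding_number (gam p d) z = (if \<sigma> = 1 then 0 else -1)"
proof -
  define W where "W = winding_number (gam p d)"
  note GP = gam_props[OF sp]
  have J: "inside (bdry p d) \<noteq> {} \<and> open (inside (bdry p d)) \<and> connected (inside (bdry p d)) \<and>
          outside (bdry p d) \<noteq> {} \<and> open (outside (bdry p d)) \<and> connected (outside (bdry p d)) \<and>
          bounded (inside (bdry p d)) \<and> \<not> bounded (outside (bdry p d)) \<and>
          inside (bdry p d) \<inter> outside (bdry p d) = {} \<and>
          inside (bdry p d) \<union> outside (bdry p d) = - bdry p d \<and>
          frontier (inside (bdry p d)) = bdry p d \<and> frontier (outside (bdry p d)) = bdry p d"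
    using Jordan_inside_outside[OF GP(1) GP(3)] GP(4) by simp
  obtain r where r: "0 < r" and rk: "\<And>z k. z \<in> ball y r \<Longrightarrow> k < d \<Longrightarrow> k \<noteq> i \<Longrightarrow> z \<notin> sseg p d k"
    using away[OF sp il y] by blast
  define e where "e = svec p d i"
  have ene: "e \<noteq> 0" using svec_nz[OF sp il] by (simp add: e_def)
  have ne: "0 < cmod e" using ene by simp
  define HL where "HL = ball y r \<inter> {z. fL p d i z > 0}"
  define HR where "HR = ball y r \<inter> {z. fL p d i z < 0}"
  have nbL: "z \<notin> bdry p d" if "z \<in> HL" for z
    using offpath[OF il, of z p] rk that unfolding HL_def by auto
  have nbR: "z \<notin> bdry p d" if "z \<in> HR" for z
    using offpath[OF il, of z p] rk that unfolding HR_def by auto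
  have cHL: "convex HL"
  proof -
    have "{z. fL p d i z > 0} = {z. inner (\<i> * svec p d i) z > inner (\<i> * svec p d i) (p i)}"
      by (auto simp: fL_inner)
    then show ?thesis unfolding HL_def by (simp add: convex_Int convex_halfspace_gt)
  qed
  have cHR: "convex HR"
  proof -
    have "{z. fL p d i z < 0} = {z. inner (\<i> * svec p d i) z < inner (\<i> * svec p d i) (p i)}"
      by (auto simp: fL_inner)
    then show ?thesis unfolding HR_def by (simp add: convex_Int convex_halfspace_lt)
  qed
  have "W constant_on HL" unfolding W_def
    by (rule winding_number_constant[OF GP(2) GP(3)]) (use cHL convex_connected nbL GP(4) in auto)
  then obtain WL where WL: "\<And>z. z \<in> HL \<Longrightarrow> W z = WL" unfolding constant_on_def by blast
  have "W constant_on HR" unfolding W_def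
    by (rule winding_number_constant[OF GP(2) GP(3)]) (use cHR convex_connected nbR GP(4) in auto)
  then obtain WR where WR: "\<And>z. z \<in> HR \<Longrightarrow> W z = WR" unfolding constant_on_def by blast
  have vals: "W z = \<sigma> \<or> W z = 0" if "z \<notin> bdry p d" for z
  proof -
    have "z \<in> inside (bdry p d) \<or> z \<in> outside (bdry p d)" using J that by blast
    then show ?thesis using ins out unfolding W_def by blast
  qed
  have yseg: "y \<in> sseg p d i" using y unfolding oseg_def sseg_def open_segment_def by auto
  have fy: "fL p d i y = 0" using fL_seg[OF yseg] .
  define g where "g z = (\<Sum>k\<in>{..<d} - {i}. winding_number (sg p d k) z)" for z
  have gc: "continuous (at y) g" unfolding g_def
  proof (intro continuous_sum ballI)
    fix k assume k: "k \<in> {..<d} - {i}"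
    have "y \<notin> path_image (sg p d k)" using rk[of y k] r k by (simp add: sg_def sseg_def)
    then show "continuous (at y) (winding_number (sg p d k))"
      by (intro continuous_at_winding_number) (simp_all add: sg_def)
  qed
  obtain \<delta> where \<delta>: "0 < \<delta>" "\<And>z. dist z y < \<delta> \<Longrightarrow> dist (g z) (g y) < 1/2"
    using gc unfolding continuous_at_eps_delta by (meson zero_less_divide_1_iff zero_less_numeral)
  have Wsplit: "W z = winding_number (sg p d i) z + g z" if "z \<notin> bdry p d" for z
  proof -
    have "W z = (\<Sum>k<d. winding_number (sg p d k) z)" using GP(5)[OF that] by (simp add: W_def)
    also have "\<dots> = winding_number (sg p d i) z + g z"
      unfolding g_def using il by (simp add: sum.remove)
    finally show ?thesis .
  qed
  define \<epsilon> where "\<epsilon> = min r \<delta> / (2 * cmod e)"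
  have \<epsilon>0: "0 < \<epsilon>" using r \<delta> ne by (simp add: \<epsilon>_def)
  define zL where "zL = y + of_real \<epsilon> * (\<i> * e)"
  define zR where "zR = y + of_real (- \<epsilon>) * (\<i> * e)"
  have ee: "\<epsilon> * cmod e = min r \<delta> / 2" using ne by (simp add: \<epsilon>_def)
  have "dist zL y = cmod (of_real \<epsilon> * (\<i> * e))" by (simp add: zL_def dist_norm)
  also have "\<dots> = \<epsilon> * cmod e" using \<epsilon>0 by (simp add: norm_mult)
  finally have dL: "dist zL y = min r \<delta> / 2" using ee by simp
  have "dist zR y = cmod (of_real (- \<epsilon>) * (\<i> * e))" by (simp add: zR_def dist_norm)
  also have "\<dots> = \<epsilon> * cmod e" using \<epsilon>0 by (simp add: norm_mult)
  finally have dR: "dist zR y = min r \<delta> / 2" using ee by simp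
  have fzL: "fL p d i zL = \<epsilon> * (cmod e)^2" unfolding zL_def e_def fL_add im_cnj_ie using fy by simp
  have fzR: "fL p d i zR = - \<epsilon> * (cmod e)^2" unfolding zR_def e_def fL_add im_cnj_ie using fy by simp
  have zLH: "zL \<in> HL" using dL fzL \<epsilon>0 ne r \<delta> unfolding HL_def by (simp add: dist_commute)
  have zRH: "zR \<in> HR" using dR fzR \<epsilon>0 ne r \<delta> unfolding HR_def by (simp add: dist_commute)
  have "0 < fL p d i zL" using fzL \<epsilon>0 ne by simp
  then have hL: "0 < Im (cnj (p (nxt d i) - p i) * (zL - p i))" unfolding fL_def svec_def .
  have "fL p d i zR < 0" using fzR \<epsilon>0 ne by simp
  then have hR: "Im (cnj (p (nxt d i) - p i) * (zR - p i)) < 0" unfolding fL_def svec_def .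
  have posL: "0 < Re (winding_number (sg p d i) zL)"
    unfolding sg_def
    by (rule winding_number_linepath_pos_lt) (unfold im_ident1, rule hL)
  have negR: "Re (winding_number (sg p d i) zR) < 0"
    unfolding sg_def
    by (rule winding_number_linepath_neg_lt) (unfold im_ident2, use hR in linarith)
  have "dist zL y < \<delta>" using dL \<delta>(1) r by linarith
  then have gL: "dist (g zL) (g y) < 1/2" using \<delta>(2) by blast
  have "dist zR y < \<delta>" using dR \<delta>(1) r by linarith
  then have gR: "dist (g zR) (g y) < 1/2" using \<delta>(2) by blast
  have "Re (g zL) - Re (g zR) > -1"
  proof -
    have "\<bar>Re (g zL) - Re (g y)\<bar> < 1/2" using gL abs_Re_le_cmod[of "g zL - g y"] by (simp add: dist_norm)
    moreover have "\<bar>Re (g zR) - Re (g y)\<bar> < 1/2" using gR abs_Re_le_cmod[of "g zR - g y"] by (simp add: dist_norm)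
    ultimately show ?thesis by linarith
  qed
  then have Rdiff: "Re WL - Re WR > -1"
    using Wsplit[OF nbL[OF zLH]] Wsplit[OF nbR[OF zRH]] WL[OF zLH] WR[OF zRH] posL negR by simp
  have WLv: "WL = \<sigma> \<or> WL = 0" using vals[OF nbL[OF zLH]] WL[OF zLH] by simp
  have WRv: "WR = \<sigma> \<or> WR = 0" using vals[OF nbR[OF zRH]] WR[OF zRH] by simp
  have yb: "y \<in> bdry p d" using oseg_bdry[OF il] y by blast
  have inHLR: "\<exists>z. z \<in> S \<and> (z \<in> HL \<or> z \<in> HR)" if SS: "open S" "frontier S = bdry p d" for S
  proof -
    obtain z1 where z1: "z1 \<in> S" "dist y z1 < r" using SS(2) yb r frontier_straddle[of y S] by blast
    obtain z where "z \<in> S" "z \<in> ball y r" "fL p d i z \<noteq> 0"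
      using nonzero_pt[OF SS(1) z1(1), of y r p d i] z1 ene by (auto simp: e_def)
    then show ?thesis unfolding HL_def HR_def by (auto simp: linorder_neq_iff)
  qed
  have oi: "open (inside (bdry p d))" "frontier (inside (bdry p d)) = bdry p d" using J by simp_all
  have oo: "open (outside (bdry p d))" "frontier (outside (bdry p d)) = bdry p d" using J by simp_all
  obtain zi where zi: "zi \<in> inside (bdry p d)" "zi \<in> HL \<or> zi \<in> HR" using inHLR[OF oi] by blast
  obtain zo where zo: "zo \<in> outside (bdry p d)" "zo \<in> HL \<or> zo \<in> HR" using inHLR[OF oo] by blast
  have Wi: "W zi = \<sigma>" using ins zi(1) by (simp add: W_def)
  have Wo: "W zo = 0" using out zo(1) by (simp add: W_def)
  have "WL \<noteq> WR"
  proof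
    assume eq: "WL = WR"
    have "W zi = WL" using zi(2) WL WR eq by blast
    moreover have "W zo = WL" using zo(2) WL WR eq by blast
    ultimately have "\<sigma> = 0" using Wi Wo by simp
    then show False using sig by auto
  qed
  then have vLR: "WL = (if \<sigma> = 1 then 1 else 0) \<and> WR = (if \<sigma> = 1 then 0 else -1)"
  proof -
    assume ne: "WL \<noteq> WR"
    from sig show ?thesis
    proof
      assume s1: "\<sigma> = 1"
      show ?thesis
      proof (cases "WL = 0")
        case True
        then have "WR = 1" using WRv ne s1 by simp
        then show ?thesis using Rdiff True by simp
      next
        case False
        then have "WL = 1" "WR = 0" using WLv WRv ne s1 by auto
        then show ?thesis using s1 by simp
      qed
    next
      assume s1: "\<sigma> = -1"
      show ?thesis
      proof (cases "WL = 0")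
        case True
        then have "WR = -1" using WRv ne s1 by simp
        then show ?thesis using True s1 by simp
      next
        case False
        then have "WL = -1" "WR = 0" using WLv WRv ne s1 by auto
        then show ?thesis using Rdiff by simp
      qed
    qed
  qed
  show ?thesis
  proof (rule that[OF r])
    fix z assume "z \<in> ball y r" "fL p d i z > 0"
    then have "z \<in> HL" unfolding HL_def by simp
    then show "z \<notin> bdry p d \<and> winding_number (gam p d) z = (if \<sigma> = 1 then 1 else 0)"
      using nbL WL vLR unfolding W_def by simp
  next
    fix z assume "z \<in> ball y r" "fL p d i z < 0"
    then have "z \<in> HR" unfolding HR_def by simp
    then show "z \<notin> bdry p d \<and> winding_number (gam p d) z = (if \<sigma> = 1 then 0 else -1)"
      using nbR WR vLR unfolding W_def by simp
  qed
qed


lemma re_refl: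
  assumes t: "cmod t = 1" shows "Re (t\<^sup>2 * cnj v / (\<i> * t)) = - Im (cnj t * v)"
proof -
  have t0: "t \<noteq> 0" using t by auto
  have "t\<^sup>2 * cnj v / (\<i> * t) = - \<i> * (t * cnj v)" using t0 by (simp add: power2_eq_square field_simps)
  then show ?thesis by simp
qed

lemma im_scale: "Im (cnj e * (of_real c * v)) = c * Im (cnj e * v)"
proof -
  have "cnj e * (of_real c * v) = of_real c * (cnj e * v)" by (simp add: algebra_simps)
  then show ?thesis by (simp add: algebra_simps)
qed

lemma good_poly:
  assumes sp: "simple_polygon p d" shows "good p d"
proof -
  note GP = gam_props[OF sp]
  define W where "W = winding_number (gam p d)"
  obtain \<sigma> where sig: "\<sigma> = 1 \<or> \<sigma> = -1" and ins: "\<And>z. z \<in> inside (bdry p d) \<Longrightarrow> W z = \<sigma>"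
  proof (rule simple_closed_path_winding_number_inside[OF GP(1)])
    assume "\<And>z. z \<in> inside (path_image (gam p d)) \<Longrightarrow> winding_number (gam p d) z = 1"
    then show ?thesis using that[of 1] GP(4) by (simp add: W_def)
  next
    assume "\<And>z. z \<in> inside (path_image (gam p d)) \<Longrightarrow> winding_number (gam p d) z = -1"
    then show ?thesis using that[of "-1"] GP(4) by (simp add: W_def)
  qed
  have out: "\<And>z. z \<in> outside (bdry p d) \<Longrightarrow> W z = 0"
    using winding_number_zero_in_outside[OF GP(2) GP(3)] GP(4) by (simp add: W_def)
  have ins': "\<And>z. z \<in> inside (bdry p d) \<Longrightarrow> winding_number (gam p d) z = \<sigma>" using ins by (simp add: W_def)
  have out': "\<And>z. z \<in> outside (bdry p d) \<Longrightarrow> winding_number (gam p d) z = 0" using out by (simp add: W_def)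
  show ?thesis unfolding good_def
  proof
    fix y assume y: "y \<in> Mdom p d"
    obtain s \<theta> where y_eq: "y = (s, \<theta>)" by (cases y)
    obtain i j t where il: "i < d" and osi: "on_side p d i s" and sid: "side_of p d s = i"
      and th: "-(pi/2) < \<theta>" "\<theta> < pi/2" and fh: "first_hit p d s \<theta> t" and jl: "j < d"
      and xj: "pos p d s + of_real t * vel p d s \<theta> \<in> oseg p d j"
      and snd_eq: "snd (bmap p d (s, \<theta>)) = Arg ((tang p d j)\<^sup>2 * cnj (vel p d s \<theta>) / inormal p d j)"
      and vel_eq: "vel p d s \<theta> = inormal p d i * cis \<theta>"
      using mdom_data[OF sp y[unfolded y_eq]] by metis
    define v where "v = vel p d s \<theta>"
    define x where "x = pos p d s"
    define x' where "x' = x + of_real t * v"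
    have xi: "x \<in> oseg p d i" using pos_on_side(2)[OF sp osi] by (simp add: x_def)
    have x'j: "x' \<in> oseg p d j" using xj by (simp add: x'_def x_def v_def)
    have t0: "0 < t" using fh by (simp add: first_hit_def)
    have allfh: "\<And>t'. 0 < t' \<Longrightarrow> t' < t \<Longrightarrow> x + of_real t' * v \<notin> bdry p d"
      using fh unfolding first_hit_def x_def v_def by blast
    have tj: "cmod (tang p d j) = 1" using norm_tang[OF sp jl] .
    have ti: "cmod (tang p d i) = 1" using norm_tang[OF sp il] .
    have vn: "cmod v = 1" using ti by (simp add: v_def vel_eq inormal_def norm_mult)
    define ej where "ej = svec p d j"
    define ei where "ei = svec p d i"
    have Lj: "0 < slen p d j" using slen_pos[OF sp jl] .
    have Li: "0 < slen p d i" using slen_pos[OF sp il] .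
    have ejt: "ej = of_real (slen p d j) * tang p d j" using Lj by (simp add: ej_def tang_def)
    have eit: "ei = of_real (slen p d i) * tang p d i" using Li by (simp add: ei_def tang_def)
    have "Im (cnj ej * v) < 0"
    proof (rule ccontr)
      assume "\<not> Im (cnj ej * v) < 0"
      then have c0: "0 \<le> Im (cnj ej * v)" by simp
      show False
      proof (cases "Im (cnj ej * v) = 0")
        case True
        obtain u where u: "0 < u" "u < 1" and x'u: "x' = (1 - u) *\<^sub>R p j + u *\<^sub>R p (nxt d j)"
          using x'j unfolding oseg_def in_segment by blast
        have x'e: "x' = p j + of_real u * ej" by (simp add: x'u ej_def svec_def scaleR_conv_of_real algebra_simps)
        have ejn: "ej \<noteq> 0" using svec_nz[OF sp jl] by (simp add: ej_def)
        define \<kappa> where "\<kappa> = Re (cnj ej * v) / (cmod ej)^2"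
        have cv: "cnj ej * v = of_real (Re (cnj ej * v))" using True by (simp add: complex_eq_iff)
        have n2: "(of_real ((cmod ej)^2) :: complex) = ej * cnj ej"
          using complex_norm_square[of ej] by simp
        have "of_real ((cmod ej)^2) * v = ej * (cnj ej * v)"
          by (simp only: n2 mult.assoc)
        also have "\<dots> = of_real (Re (cnj ej * v)) * ej" by (subst cv) simp
        finally have "v = of_real \<kappa> * ej" using ejn by (simp add: \<kappa>_def field_simps)
        then have ve: "v = of_real \<kappa> * ej" .
        define \<mu> where "\<mu> = min u (1 - u) / (2 * (\<bar>\<kappa>\<bar> + 1))"
        define \<tau> where "\<tau> = min (t / 2) \<mu>"
        have \<mu>0: "0 < \<mu>" using u by (simp add: \<mu>_def add_pos_nonneg)
        have \<tau>0: "0 < \<tau>" "\<tau> < t" using \<mu>0 t0 by (auto simp: \<tau>_def)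
        have "\<bar>\<tau> * \<kappa>\<bar> \<le> \<mu> * \<bar>\<kappa>\<bar>" using \<tau>0 \<mu>0 by (simp add: abs_mult \<tau>_def mult_right_mono)
        also have "\<mu> * \<bar>\<kappa>\<bar> < min u (1 - u)"
        proof -
          have "\<mu> * \<bar>\<kappa>\<bar> = min u (1 - u) * (\<bar>\<kappa>\<bar> / (2 * (\<bar>\<kappa>\<bar> + 1)))" by (simp add: \<mu>_def)
          also have "\<bar>\<kappa>\<bar> / (2 * (\<bar>\<kappa>\<bar> + 1)) < 1" by (simp add: field_simps)
          then have "min u (1 - u) * (\<bar>\<kappa>\<bar> / (2 * (\<bar>\<kappa>\<bar> + 1))) < min u (1 - u) * 1"
            using u by (intro mult_strict_left_mono) auto
          finally show ?thesis by simp
        qed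
        finally have tk: "\<bar>\<tau> * \<kappa>\<bar> < min u (1 - u)" .
        define u' where "u' = u - \<tau> * \<kappa>"
        have u': "0 \<le> u'" "u' \<le> 1" using tk u by (auto simp: u'_def abs_less_iff)
        have "x + of_real (t - \<tau>) * v = x' - of_real \<tau> * v" by (simp add: x'_def algebra_simps)
        also have "\<dots> = (1 - u') *\<^sub>R p j + u' *\<^sub>R p (nxt d j)"
          by (simp add: x'e ve u'_def ej_def svec_def scaleR_conv_of_real algebra_simps)
        finally have "x + of_real (t - \<tau>) * v \<in> sseg p d j"
          unfolding sseg_def in_segment using u' by blast
        then have "x + of_real (t - \<tau>) * v \<in> bdry p d" using jl by (auto simp: bdry_def)
        moreover have "x + of_real (t - \<tau>) * v \<notin> bdry p d" using allfh[of "t - \<tau>"] \<tau>0 by linarith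
        ultimately show False by blast
      next
        case False
        then have cpos: "0 < Im (cnj ej * v)" using c0 by simp
        obtain ri where ri: "0 < ri" and riL: "\<And>z. z \<in> ball x ri \<Longrightarrow> fL p d i z > 0 \<Longrightarrow>
             z \<notin> bdry p d \<and> winding_number (gam p d) z = (if \<sigma> = 1 then 1 else 0)"
          using local_side[OF sp il xi sig ins' out'] by metis
        obtain rj where rj: "0 < rj" and rjR: "\<And>z. z \<in> ball x' rj \<Longrightarrow> fL p d j z < 0 \<Longrightarrow>
             z \<notin> bdry p d \<and> winding_number (gam p d) z = (if \<sigma> = 1 then 0 else -1)"
          using local_side[OF sp jl x'j sig ins' out'] by metis
        define \<tau>1 where "\<tau>1 = min (t/2) (ri/2)"
        define \<tau>2 where "\<tau>2 = min (t/2) (rj/2)"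
        have \<tau>1: "0 < \<tau>1" "\<tau>1 < t" "\<tau>1 < ri" using t0 ri by (auto simp: \<tau>1_def)
        have \<tau>2: "0 < \<tau>2" "\<tau>2 < t" "\<tau>2 < rj" using t0 rj by (auto simp: \<tau>2_def)
        define A where "A = x + of_real \<tau>1 * v"
        define B where "B = x + of_real (t - \<tau>2) * v"
        have Bx': "B = x' + of_real (- \<tau>2) * v" by (simp add: B_def x'_def algebra_simps)
        have dA: "dist A x = \<tau>1" using \<tau>1 vn by (simp add: A_def dist_norm norm_mult)
        have dB: "dist B x' = \<tau>2" using \<tau>2 vn by (simp add: Bx' dist_norm norm_mult)
        have fxi: "fL p d i x = 0" using fL_seg xi unfolding oseg_def sseg_def open_segment_def by auto
        have fxj: "fL p d j x' = 0" using fL_seg x'j unfolding oseg_def sseg_def open_segment_def by auto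
        have civ: "cnj ei * v = of_real (slen p d i) * (\<i> * cis \<theta>)"
        proof -
          have tc: "cnj (tang p d i) * tang p d i = 1" using unit_cnj[OF ti] by (simp add: mult.commute)
          have "cnj ei * v = of_real (slen p d i) * (cnj (tang p d i) * tang p d i) * (\<i> * cis \<theta>)"
            by (simp add: eit v_def vel_eq inormal_def algebra_simps)
          then show ?thesis using tc by simp
        qed
        have "Im (cnj ei * v) = slen p d i * cos \<theta>" by (simp add: civ)
        moreover have "0 < cos \<theta>" using cos_gt_zero_pi th by blast
        ultimately have cipos: "0 < Im (cnj ei * v)" using Li by simp
        have fA: "0 < fL p d i A" unfolding A_def fL_add im_scale using fxi \<tau>1 cipos by (simp add: ei_def)
        have fB: "fL p d j B < 0" unfolding Bx' fL_add im_scale using fxj \<tau>2 cpos by (simp add: ej_def)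
        have WA: "winding_number (gam p d) A = (if \<sigma> = 1 then 1 else 0)"
          using riL[of A] fA dA \<tau>1 by (simp add: dist_commute)
        have WB: "winding_number (gam p d) B = (if \<sigma> = 1 then 0 else -1)"
          using rjR[of B] fB dB \<tau>2 by (simp add: dist_commute)
        define S where "S = (\<lambda>\<tau>. x + of_real \<tau> * v) ` {0<..<t}"
        have cS: "connected S" unfolding S_def
          by (intro connected_continuous_image continuous_intros) simp
        have dS: "S \<inter> path_image (gam p d) = {}" using allfh GP(4) unfolding S_def by auto
        have "winding_number (gam p d) constant_on S"
          by (rule winding_number_constant[OF GP(2) GP(3) cS dS])
        moreover have "A \<in> S" using \<tau>1 unfolding S_def A_def by auto
        moreover have "B \<in> S" unfolding S_def B_def
          by (rule imageI) (use \<tau>2 in auto)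
        ultimately have "winding_number (gam p d) A = winding_number (gam p d) B"
          unfolding constant_on_def by metis
        then show False using WA WB sig by (auto split: if_splits)
      qed
    qed
    moreover have "Im (cnj ej * v) = slen p d j * Im (cnj (tang p d j) * v)"
      unfolding ejt by (simp add: im_scale[of "tang p d j" "slen p d j" v, symmetric] algebra_simps)
    ultimately have "slen p d j * Im (cnj (tang p d j) * v) < 0" by simp
    then have "Im (cnj (tang p d j) * v) < 0" using Lj by (simp add: mult_less_0_iff)
    then have "0 < Re ((tang p d j)\<^sup>2 * cnj v / (\<i> * tang p d j))"
      using re_refl[OF tj, of v] by linarith
    then have "\<bar>Arg ((tang p d j)\<^sup>2 * cnj v / inormal p d j)\<bar> < pi / 2"
      using Arg_Re_pos by (simp add: inormal_def)
    then have "\<bar>snd (bmap p d y)\<bar> < pi / 2" using snd_eq by (simp add: y_eq v_def)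
    then show "-(pi/2) < snd (bmap p d y) \<and> snd (bmap p d y) < pi/2" by linarith
  qed
qed

theorem lemma2p6:
  fixes p :: "nat \<Rightarrow> complex" and d :: nat and C :: "(real \<times> real) set"
  assumes "simple_polygon p d" and "anticlockwise p d"
    and "periodic_cylinder p d C"
  shows "cyl_lam_minus_stable p d C \<longleftrightarrow> cyl_lam_plus_stable p d (Srev ` C)"
  using main_from_good[OF assms(1) good_poly[OF assms(1)]] .


end
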